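(* Let $X$ be a locally finite poset with a unique minimal element $0$ and let $g:X\to L^+$ be isotone. Then the set of functions $f:X\to L^+$ satisfying $g(x)=\bigvee_{y\le x}f(y)$ for all $x\in X$ is exactly the interval $[m_*,m^*]=\{f: m_*(x)\le f(x)\le m^*(x)\ \forall x\in X\}$, where $m^*(x)=g(x)$ for all $x$, and $m_*(x)=g(x)$ if $g(x)>g(y)$ for all $y\prec x$, $m_*(x)=\mathbb{O}$ otherwise.
   Context: $(L^+,\le)$ is a totally ordered set with bottom $\mathbb{O}$ and top $\mathbb{1}$. $X$ locally finite means every interval $[u,v]=\{x:u\le x\le v\}$ is finite. $y\prec x$ means $x$ covers $y$ ($y<x$ and no element strictly between). Isotone means order preserving. *)

theory Defs
  imports Main
begin

definition covered_by :: "'a::order \<Rightarrow> 'a \<Rightarrow> bool" where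
  "covered_by y x \<longleftrightarrow> y < x \<and> \<not> (\<exists>z. y < z \<and> z < x)"

definition locally_finite_order :: "'a::order itself \<Rightarrow> bool" where
  "locally_finite_order _ \<longleftrightarrow> (\<forall>u v::'a. finite {x. u \<le> x \<and> x \<le> v})"

definition is_join :: "'b::order set \<Rightarrow> 'b \<Rightarrow> bool" where
  "is_join S a \<longleftrightarrow> (\<forall>s\<in>S. s \<le> a) \<and> (\<forall>b. (\<forall>s\<in>S. s \<le> b) \<longrightarrow> a \<le> b)"

definition m_upper :: "('a \<Rightarrow> 'b) \<Rightarrow> 'a \<Rightarrow> 'b" where
  "m_upper g x = g x"

definition m_lower :: "('a::order \<Rightarrow> 'b::{linorder,order_bot}) \<Rightarrow> 'a \<Rightarrow> 'b" where
  "m_lower g x = (if (\<forall>y. covered_by y x \<longrightarrow> g y < g x) then g x else bot)"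

end

theory Submission
  imports Defs
begin

lemma fin_below:
  assumes "locally_finite_order TYPE('a::order)" and "\<forall>x. (zero::'a) \<le> x"
  shows "finite {y::'a. y \<le> x}"
proof -
  have "finite {y. zero \<le> y \<and> y \<le> x}" using assms(1) unfolding locally_finite_order_def by blast
  moreover have "{y. zero \<le> y \<and> y \<le> x} = {y. y \<le> x}" using assms(2) by auto
  ultimately show ?thesis by simp
qed

lemma cover_exists:
  assumes fin: "finite {w::'a::order. w \<le> x}" and "y < x"
  shows "\<exists>z. y \<le> z \<and> covered_by z x"
proof -
  let ?S = "{z. y \<le> z \<and> z < x}"
  have "finite ?S" by (rule finite_subset[OF _ fin]) auto
  moreover have "?S \<noteq> {}" using assms(2) by auto
  ultimately obtain m where m: "m \<in> ?S" "\<forall>b\<in>?S. m \<le> b \<longrightarrow> m = b"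
    using finite_has_maximal by blast
  have "covered_by m x" unfolding covered_by_def
  proof (intro conjI notI)
    show "m < x" using m by auto
  next
    assume "\<exists>z. m < z \<and> z < x"
    then obtain z where "m < z" "z < x" by blast
    have "y \<le> z" using m \<open>m < z\<close> by auto
    hence "z \<in> ?S" using \<open>z < x\<close> by simp
    hence "m = z" using m \<open>m < z\<close> by auto
    thus False using \<open>m < z\<close> by simp
  qed
  thus ?thesis using m by auto
qed

theorem theorem2:
  fixes g :: "'a::order \<Rightarrow> 'l::{linorder,order_bot,order_top}"
    and zero :: 'a
  assumes "locally_finite_order TYPE('a)"
    and "\<forall>x. zero \<le> x"
    and "mono g"
  shows "{f :: 'a \<Rightarrow> 'l. \<forall>x. is_join {f y | y. y \<le> x} (g x)}
       = {f. \<forall>x. m_lower g x \<le> f x \<and> f x \<le> m_upper g x}"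
proof (intro set_eqI iffI; simp)
  have fin: "\<And>x. finite {y::'a. y \<le> x}" using fin_below[OF assms(1,2)] .
  fix f :: "'a \<Rightarrow> 'l"
  {
    assume J: "\<forall>x. is_join {f y | y. y \<le> x} (g x)"
    show "\<forall>x. m_lower g x \<le> f x \<and> f x \<le> m_upper g x"
    proof
      fix x
      have up: "f x \<le> g x" using J unfolding is_join_def by blast
      have "m_lower g x \<le> f x"
      proof (cases "\<forall>y. covered_by y x \<longrightarrow> g y < g x")
        case False hence "m_lower g x = bot" unfolding m_lower_def by (intro if_not_P) blast
        thus ?thesis by simp
      next
        case True
        let ?S = "{f y | y. y \<le> x}"
        have fS: "finite ?S" using fin[of x] by (simp add: setcompr_eq_image)
        have neS: "?S \<noteq> {}" by auto
        have "Max ?S \<in> ?S" using fS neS by (rule Max_in)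
        then obtain y0 where y0: "y0 \<le> x" "f y0 = Max ?S" by auto
        have ub: "\<forall>s\<in>?S. s \<le> Max ?S" using fS by auto
        have "is_join ?S (g x)" using J by blast
        hence "g x \<le> Max ?S" using ub unfolding is_join_def by blast
        hence "g x \<le> f y0" using y0 by simp
        moreover have "f y0 \<le> g y0" using J unfolding is_join_def by blast
        moreover have "g y0 \<le> g x" using assms(3) y0(1) by (simp add: mono_def)
        ultimately have eq: "g y0 = g x" "f y0 = g x" by auto
        show ?thesis
        proof (cases "y0 = x")
          case True thus ?thesis using eq by (simp add: m_lower_def)
        next
          case False
          hence "y0 < x" using y0 by auto
          then obtain z where z: "y0 \<le> z" "covered_by z x" using cover_exists[OF fin] by blast
          have "g y0 \<le> g z" using assms(3) z(1) by (simp add: mono_def)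
          thus ?thesis using True z eq by fastforce
        qed
      qed
      thus "m_lower g x \<le> f x \<and> f x \<le> m_upper g x" using up by (simp add: m_upper_def)
    qed
  }
  {
    assume B: "\<forall>x. m_lower g x \<le> f x \<and> f x \<le> m_upper g x"
    have P: "\<exists>z\<le>x. g x \<le> f z" for x
    proof (induction "card {y. y \<le> x}" arbitrary: x rule: less_induct)
      case less
      show ?case
      proof (cases "\<forall>y. covered_by y x \<longrightarrow> g y < g x")
        case True
        hence "m_lower g x = g x" unfolding m_lower_def by (intro if_P)
        moreover have "m_lower g x \<le> f x" using B by blast
        ultimately have "g x \<le> f x" by simp
        thus ?thesis by blast
      next
        case False
        then obtain y where y: "covered_by y x" "\<not> g y < g x" by blast
        have yx: "y < x" using y(1) by (simp add: covered_by_def)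
        have "g y \<le> g x" using assms(3) yx by (simp add: mono_def)
        hence gy: "g y = g x" using y(2) by auto
        have "{w. w \<le> y} \<subseteq> {w. w \<le> x}" using yx by auto
        moreover have "x \<notin> {w. w \<le> y}" using yx by auto
        ultimately have "{w. w \<le> y} \<subset> {w. w \<le> x}" by blast
        hence "card {w. w \<le> y} < card {w. w \<le> x}" using fin[of x] by (rule psubset_card_mono[rotated])
        then obtain z where z: "z \<le> y" "g y \<le> f z" using less by blast
        have "z \<le> x" using order_trans[OF z(1) less_imp_le[OF yx]] .
        moreover have "g x \<le> f z" using z(2) gy by simp
        ultimately show ?thesis by blast
      qed
    qed
    show "\<forall>x. is_join {f y | y. y \<le> x} (g x)"
    proof
      fix x
      have "\<forall>s\<in>{f y | y. y \<le> x}. s \<le> g x"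
      proof
        fix s assume "s \<in> {f y | y. y \<le> x}"
        then obtain y where "y \<le> x" "s = f y" by auto
        moreover have "f y \<le> g y" using B by (simp add: m_upper_def)
        moreover have "g y \<le> g x" using assms(3) \<open>y \<le> x\<close> by (simp add: mono_def)
        ultimately show "s \<le> g x" by auto
      qed
      moreover have "\<forall>b. (\<forall>s\<in>{f y | y. y \<le> x}. s \<le> b) \<longrightarrow> g x \<le> b"
      proof (intro allI impI)
        fix b assume H: "\<forall>s\<in>{f y | y. y \<le> x}. s \<le> b"
        obtain z where z: "z \<le> x" "g x \<le> f z" using P[of x] by blast
        have "f z \<in> {f y | y. y \<le> x}" using z(1) by blast
        hence "f z \<le> b" using H by blast
        thus "g x \<le> b" using z(2) by simp
      qed
      ultimately show "is_join {f y | y. y \<le> x} (g x)" unfolding is_join_def by blast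
    qed
  }
qed

end
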